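(* Let $\eta>0$, $y>0$, $\tilde x>0$, set $k=\eta\tilde x$ and $\eta_c=\frac{1}{\tilde x y}$, and let $M(\Delta f)=\Delta f\left(1-2k(\Delta f+y)+k^2\Delta f(\Delta f+y)\right)$. The fixed points of $M$ are $0$, $-y$, $2/k$. The remaining six solutions of $M(M(\Delta f))=\Delta f$ are $$\Delta f=\frac{k(1-ky)\pm\sqrt{k^2(ky-1)(ky+3)}}{2k^2}$$ and four further roots whose expression involves $h=\sqrt{-7+ky(2+ky)}$, which are non-real when $ky<2\sqrt2-1$. In particular, the two points $\frac{k(1-ky)\pm\sqrt{k^2(ky-1)(ky+3)}}{2k^2}$ form a real period-two orbit of $M$ consisting of two distinct points if and only if $\eta>\eta_c$, and $M$ has no real period-two orbit when $\eta\le\eta_c$.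
   Context: $\tilde x=\|\bm x\|/\sqrt{n_{\mathrm{eff}}}$. The map $M$ is the restriction of the UV model's function-space gradient descent dynamics to the invariant EoS manifold $\lambda=2\tilde x(\Delta f+y)$, written in terms of the residual $\Delta f$. *)

theory Defs
  imports "HOL-Analysis.Analysis"
begin

definition Mmap :: "'a::field \<Rightarrow> 'a \<Rightarrow> 'a \<Rightarrow> 'a" where
  "Mmap k y d = d * (1 - 2 * k * (d + y) + k^2 * d * (d + y))"

definition dplus :: "real \<Rightarrow> real \<Rightarrow> complex" where
  "dplus k y = (complex_of_real (k * (1 - k * y))
      + csqrt (complex_of_real (k^2 * (k * y - 1) * (k * y + 3)))) / complex_of_real (2 * k^2)"

definition dminus :: "real \<Rightarrow> real \<Rightarrow> complex" where
  "dminus k y = (complex_of_real (k * (1 - k * y))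
      - csqrt (complex_of_real (k^2 * (k * y - 1) * (k * y + 3)))) / complex_of_real (2 * k^2)"

end

theory Submission imports Defs begin

lemma Mfix: "Mmap k y d - d = k*d*(d+y)*(k*d-2)"
  unfolding Mmap_def by algebra

lemma MM_fact: "k * (Mmap k y (Mmap k y d) - d) = (k*d)*(k*d+k*y)*(k*d-2)
   *((k*d)^2 - (1-k*y)*(k*d) + (1-k*y))
   *((k*d)^4 + (k*y-3)*(k*d)^3 + (3-3*k*y)*(k*d)^2 + (2*k*y-2)*(k*d)+2)"
  unfolding Mmap_def by algebra

lemma Mswap: "k*Mmap k y z + k*z - (1-k*y) = (k*z-1)*((k*z)^2 - (1-k*y)*(k*z) + (1-k*y))"
  unfolding Mmap_def by algebra

lemma q4_pos:
  fixes u t :: real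
  assumes "u^2+2*u-7 < 0"
  shows "t^4 + (u-3)*t^3 + (3-3*u)*t^2 + (2*u-2)*t + 2 > 0"
proof -
  define A where "A = t^2 + (u-3)/2*t - (u+1)/2"
  have id: "t^4 + (u-3)*t^3 + (3-3*u)*t^2 + (2*u-2)*t + 2 = A^2 + (7-2*u-u^2)*(t-1)^2/4"
    unfolding A_def by (simp add: field_simps power2_eq_square power4_eq_xxxx power3_eq_cube)
  show ?thesis
  proof (cases "t = 1")
    case True
    have "A = -1" using True unfolding A_def by (simp add: field_simps)
    then have "A^2 > 0" by simp
    then show ?thesis using id True by simp
  next
    case False
    have "(7-2*u-u^2)*(t-1)^2 > 0" using False assms by (intro mult_pos_pos) auto
    then show ?thesis using id zero_le_power2[of A] by linarith
  qed
qed

lemma quad_roots: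
  fixes K Y S z :: complex
  assumes "K \<noteq> 0" "S^2 = K^2*(K*Y-1)*(K*Y+3)"
  shows "(K*z)^2 - (1-K*Y)*(K*z) + (1-K*Y) =
     K^2*(z - (K*(1-K*Y)+S)/(2*K^2))*(z - (K*(1-K*Y)-S)/(2*K^2))"
proof -
  have "K^2*(z - (K*(1-K*Y)+S)/(2*K^2))*(z - (K*(1-K*Y)-S)/(2*K^2))
     = ((2*K^2*z - K*(1-K*Y))^2 - S^2)/(4*K^2)"
    using assms(1) by (simp add: field_simps power2_eq_square)
  also have "\<dots> = (K*z)^2 - (1-K*Y)*(K*z) + (1-K*Y)"
    using assms by (simp add: field_simps power2_eq_square)
  finally show ?thesis by simp
qed

lemma Mmap_of_real: "Mmap (complex_of_real k) (complex_of_real y) (complex_of_real d) = complex_of_real (Mmap k y d)"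
  unfolding Mmap_def by simp

theorem mainTheorem9:
  fixes eta y xt k eta_c :: real
  assumes "eta > 0" and "y > 0" and "xt > 0"
    and "k = eta * xt" and "eta_c = 1 / (xt * y)"
  shows "(\<forall>d::real. Mmap k y d = d \<longleftrightarrow> d \<in> {0, -y, 2 / k})
    \<and> Mmap (complex_of_real k) (complex_of_real y)
          (Mmap (complex_of_real k) (complex_of_real y) (dplus k y)) = dplus k y
    \<and> Mmap (complex_of_real k) (complex_of_real y)
          (Mmap (complex_of_real k) (complex_of_real y) (dminus k y)) = dminus k y
    \<and> (\<forall>z::complex.
          Mmap (complex_of_real k) (complex_of_real y) (Mmap (complex_of_real k) (complex_of_real y) z) = z
          \<and> z \<notin> {0, - complex_of_real y, complex_of_real (2 / k), dplus k y, dminus k y}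
          \<and> k * y < 2 * sqrt 2 - 1
          \<longrightarrow> z \<notin> \<real>)
    \<and> ((dplus k y \<in> \<real> \<and> dminus k y \<in> \<real> \<and> dplus k y \<noteq> dminus k y
          \<and> Mmap (complex_of_real k) (complex_of_real y) (dplus k y) = dminus k y
          \<and> Mmap (complex_of_real k) (complex_of_real y) (dminus k y) = dplus k y)
        \<longleftrightarrow> eta > eta_c)
    \<and> (eta \<le> eta_c \<longrightarrow> \<not> (\<exists>d::real. Mmap k y (Mmap k y d) = d \<and> Mmap k y d \<noteq> d))"
proof -
  have kpos: "k > 0" using assms by simp
  define u where "u = k*y"
  have upos: "u > 0" using kpos assms unfolding u_def by simp
  have eta_iff: "eta > eta_c \<longleftrightarrow> u > 1"
  proof -
    have "xt*y > 0" using assms by simp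
    then have "eta_c < eta \<longleftrightarrow> 1 < eta*(xt*y)" unfolding assms(5) by (simp add: pos_divide_less_eq)
    then show ?thesis unfolding u_def assms(4) by (simp add: mult.assoc)
  qed
  define K where "K = complex_of_real k"
  define Y where "Y = complex_of_real y"
  define D where "D = k^2 * (k * y - 1) * (k * y + 3)"
  define S where "S = csqrt (complex_of_real D)"
  have K0: "K \<noteq> 0" using kpos unfolding K_def by simp
  have S2: "S^2 = K^2*(K*Y-1)*(K*Y+3)" unfolding S_def D_def K_def Y_def by simp
  have dp: "dplus k y = (K*(1-K*Y)+S)/(2*K^2)"
    unfolding dplus_def S_def D_def K_def Y_def by simp
  have dm: "dminus k y = (K*(1-K*Y)-S)/(2*K^2)"
    unfolding dminus_def S_def D_def K_def Y_def by simp
  have QR: "\<And>z. (K*z)^2 - (1-K*Y)*(K*z) + (1-K*Y) = K^2*(z - dplus k y)*(z - dminus k y)"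
    unfolding dp dm using quad_roots[OF K0 S2] by simp
  have Qp: "(K*dplus k y)^2 - (1-K*Y)*(K*dplus k y) + (1-K*Y) = 0" using QR by simp
  have Qm: "(K*dminus k y)^2 - (1-K*Y)*(K*dminus k y) + (1-K*Y) = 0" using QR by simp
  have MMroot: "Mmap K Y (Mmap K Y z) = z" if "(K*z)^2 - (1-K*Y)*(K*z) + (1-K*Y) = 0" for z
  proof -
    have "K * (Mmap K Y (Mmap K Y z) - z) = 0" unfolding MM_fact[of K Y z] using that by simp
    then show ?thesis using K0 by simp
  qed
  have swap: "Mmap K Y z = (1-K*Y)/K - z" if "(K*z)^2 - (1-K*Y)*(K*z) + (1-K*Y) = 0" for z
  proof -
    have "K*Mmap K Y z + K*z - (1-K*Y) = 0" using Mswap[of K Y z] that by simp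
    then show ?thesis using K0 by (simp add: field_simps)
  qed
  have sum: "dplus k y + dminus k y = (1-K*Y)/K"
    unfolding dp dm using K0 by (simp add: field_simps power2_eq_square)
  have fz: "k*d*(d+y)*(k*d-2) = 0 \<longleftrightarrow> d \<in> {0, -y, 2 / k}" for d
  proof -
    have "k*d*(d+y)*(k*d-2) = 0 \<longleftrightarrow> d=0 \<or> d+y=0 \<or> k*d-2=0" using kpos by simp
    moreover have "d+y=0 \<longleftrightarrow> d = -y" by auto
    moreover have "k*d-2=0 \<longleftrightarrow> d = 2/k" using kpos by (auto simp: field_simps)
    ultimately show ?thesis by auto
  qed
  have c1: "\<forall>d::real. Mmap k y d = d \<longleftrightarrow> d \<in> {0, -y, 2 / k}"
  proof
    fix d :: real
    have "Mmap k y d = d \<longleftrightarrow> k*d*(d+y)*(k*d-2) = 0" using Mfix[of k y d] by (metis eq_iff_diff_eq_0)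
    also have "\<dots> \<longleftrightarrow> d \<in> {0, -y, 2 / k}" by (rule fz)
    finally show "Mmap k y d = d \<longleftrightarrow> d \<in> {0, -y, 2 / k}" .
  qed
  have q4real: "\<And>d::real. u^2+2*u-7 < 0 \<Longrightarrow> Mmap k y (Mmap k y d) = d \<Longrightarrow>
      k*d*(d+y)*(k*d-2) = 0 \<or> (k*d)^2 - (1-u)*(k*d) + (1-u) = 0"
  proof -
    fix d :: real
    assume h: "u^2+2*u-7 < 0" "Mmap k y (Mmap k y d) = d"
    have "(k*d)*(k*d+k*y)*(k*d-2)
        *((k*d)^2 - (1-k*y)*(k*d) + (1-k*y))
        *((k*d)^4 + (k*y-3)*(k*d)^3 + (3-3*k*y)*(k*d)^2 + (2*k*y-2)*(k*d)+2) = 0"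
      using MM_fact[of k y d] h(2) by simp
    moreover have "(k*d)^4 + (k*y-3)*(k*d)^3 + (3-3*k*y)*(k*d)^2 + (2*k*y-2)*(k*d)+2 \<noteq> 0"
      using q4_pos[OF h(1), of "k*d"] unfolding u_def by (simp add: mult.assoc)
    moreover have "k*d+k*y = k*(d+y)" by (simp add: algebra_simps)
    ultimately show "k*d*(d+y)*(k*d-2) = 0 \<or> (k*d)^2 - (1-u)*(k*d) + (1-u) = 0"
      unfolding u_def by (auto simp: mult.assoc)
  qed
  have c4: "\<forall>z::complex.
          Mmap (complex_of_real k) (complex_of_real y) (Mmap (complex_of_real k) (complex_of_real y) z) = z
          \<and> z \<notin> {0, - complex_of_real y, complex_of_real (2 / k), dplus k y, dminus k y}
          \<and> k * y < 2 * sqrt 2 - 1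
          \<longrightarrow> z \<notin> \<real>"
  proof (intro allI impI)
    fix z :: complex
    assume h: "Mmap (complex_of_real k) (complex_of_real y) (Mmap (complex_of_real k) (complex_of_real y) z) = z
          \<and> z \<notin> {0, - complex_of_real y, complex_of_real (2 / k), dplus k y, dminus k y}
          \<and> k * y < 2 * sqrt 2 - 1"
    show "z \<notin> \<real>"
    proof
      assume "z \<in> \<real>"
      then obtain d where zd: "z = complex_of_real d" by (auto elim: Reals_cases)
      have "Mmap k y (Mmap k y d) = d" using h zd by (simp add: Mmap_of_real)
      moreover have "u^2+2*u-7 < 0"
      proof -
        have "u + 1 < 2 * sqrt 2" using h unfolding u_def by simp
        then have "(u+1)^2 < (2 * sqrt 2)^2" using upos by (intro power_strict_mono) auto
        then show ?thesis by (simp add: power2_eq_square algebra_simps)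
      qed
      ultimately have "k*d*(d+y)*(k*d-2) = 0 \<or> (k*d)^2 - (1-u)*(k*d) + (1-u) = 0"
        using q4real by blast
      then show False
      proof
        assume "k*d*(d+y)*(k*d-2) = 0"
        then have "d \<in> {0, -y, 2/k}" using fz by blast
        then show False using h zd by auto
      next
        assume "(k*d)^2 - (1-u)*(k*d) + (1-u) = 0"
        then have "complex_of_real ((k*d)^2 - (1-u)*(k*d) + (1-u)) = 0" by simp
        then have "(K*z)^2 - (1-K*Y)*(K*z) + (1-K*Y) = 0"
          unfolding K_def Y_def zd u_def by simp
        then have "z = dplus k y \<or> z = dminus k y" using QR K0 by simp
        then show False using h by auto
      qed
    qed
  qed
  have c5: "(dplus k y \<in> \<real> \<and> dminus k y \<in> \<real> \<and> dplus k y \<noteq> dminus k y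
          \<and> Mmap (complex_of_real k) (complex_of_real y) (dplus k y) = dminus k y
          \<and> Mmap (complex_of_real k) (complex_of_real y) (dminus k y) = dplus k y)
        \<longleftrightarrow> u > 1"
  proof
    assume h: "dplus k y \<in> \<real> \<and> dminus k y \<in> \<real> \<and> dplus k y \<noteq> dminus k y
          \<and> Mmap (complex_of_real k) (complex_of_real y) (dplus k y) = dminus k y
          \<and> Mmap (complex_of_real k) (complex_of_real y) (dminus k y) = dplus k y"
    have "S = K^2 * (dplus k y - dminus k y)"
      unfolding dp dm using K0 by (simp add: field_simps)
    moreover have "K^2 * (dplus k y - dminus k y) \<in> \<real>" using h unfolding K_def by auto
    ultimately obtain s where s: "S = complex_of_real s" by (auto elim: Reals_cases)
    have "S \<noteq> 0"
    proof
      assume "S = 0"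
      then show False using h unfolding dp dm by simp
    qed
    then have "s \<noteq> 0" using s by simp
    have "complex_of_real (s^2) = complex_of_real D" using s power2_csqrt[of "complex_of_real D"] unfolding S_def by simp
    then have "s^2 = D" by (simp only: of_real_eq_iff)
    with \<open>s \<noteq> 0\<close> have "D > 0" by (metis zero_less_power2)
    then have "(k^2*(u+3)) * (u - 1) > 0" unfolding D_def u_def by (simp add: algebra_simps)
    moreover have "k^2*(u+3) > 0" using kpos upos by simp
    ultimately show "u > 1" by (simp add: zero_less_mult_iff)
  next
    assume u1: "u > 1"
    have Dpos: "D > 0" using u1 kpos unfolding D_def u_def by simp
    have Sr: "S = complex_of_real (sqrt D)" unfolding S_def using Dpos by (simp add: csqrt_of_real)
    have r1: "dplus k y \<in> \<real>" unfolding dp Sr K_def Y_def by simp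
    have r2: "dminus k y \<in> \<real>" unfolding dm Sr K_def Y_def by simp
    have ne: "dplus k y \<noteq> dminus k y"
    proof
      assume "dplus k y = dminus k y"
      then have "S = 0" unfolding dp dm using K0 by (simp add: field_simps)
      then show False using Dpos Sr by simp
    qed
    have "Mmap K Y (dplus k y) = dminus k y" using swap[OF Qp] sum by (metis add_diff_cancel_left')
    moreover have "Mmap K Y (dminus k y) = dplus k y" using swap[OF Qm] sum by (metis add_diff_cancel_left' add.commute)
    ultimately show "dplus k y \<in> \<real> \<and> dminus k y \<in> \<real> \<and> dplus k y \<noteq> dminus k y
          \<and> Mmap (complex_of_real k) (complex_of_real y) (dplus k y) = dminus k y
          \<and> Mmap (complex_of_real k) (complex_of_real y) (dminus k y) = dplus k y"
      using r1 r2 ne unfolding K_def Y_def by simp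
  qed
  have c6: "eta \<le> eta_c \<longrightarrow> \<not> (\<exists>d::real. Mmap k y (Mmap k y d) = d \<and> Mmap k y d \<noteq> d)"
  proof (intro impI notI)
    assume "eta \<le> eta_c"
    then have u1: "u \<le> 1" using eta_iff by simp
    assume "\<exists>d::real. Mmap k y (Mmap k y d) = d \<and> Mmap k y d \<noteq> d"
    then obtain d where d: "Mmap k y (Mmap k y d) = d" "Mmap k y d \<noteq> d" by blast
    have "u*u \<le> 1*1" using u1 upos by (intro mult_mono) auto
    then have "u^2+2*u-7 < 0" using u1 by (simp add: power2_eq_square)
    then have "k*d*(d+y)*(k*d-2) = 0 \<or> (k*d)^2 - (1-u)*(k*d) + (1-u) = 0"
      using q4real d(1) by blast
    then show False
    proof
      assume "k*d*(d+y)*(k*d-2) = 0"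
      then have "Mmap k y d - d = 0" using Mfix[of k y d] by simp
      then show False using d(2) by simp
    next
      assume q: "(k*d)^2 - (1-u)*(k*d) + (1-u) = 0"
      define t where "t = k*d"
      have e: "(t - (1-u)/2)^2 + (1-u)*(3+u)/4 = t^2 - (1-u)*t + (1-u)"
        by (simp add: field_simps power2_eq_square)
      have "(t - (1-u)/2)^2 + (1-u)*(3+u)/4 = 0" using q e unfolding t_def by simp
      moreover have "(1-u)*(3+u)/4 \<ge> 0" using u1 upos by simp
      ultimately have "(t - (1-u)/2)^2 = 0" "(1-u)*(3+u)/4 = 0"
        using zero_le_power2[of "t - (1-u)/2"] by linarith+
      then have "u = 1" "t = 0" using upos by auto
      then have "d = 0" using kpos unfolding t_def by simp
      then show False using d(2) unfolding Mmap_def by simp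
    qed
  qed
  show ?thesis
    using c1 c4 c5 c6 MMroot[OF Qp] MMroot[OF Qm] eta_iff unfolding K_def Y_def by blast
qed

end
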